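(* Let $n\ge 2$ and let $\Gamma=(\gamma_{i,j})\in\mathcal{M}_n(\mathbb{R})$ be symmetric with entries in $[0,1]$, zero diagonal, and at least one strictly positive off-diagonal entry in each row, such that the weighted graph with weight matrix $\Gamma$ is connected. Let $\boldsymbol{\eta}=\Gamma\mathbf{1}_n$, $L=\operatorname{diag}(\boldsymbol{\eta})-\Gamma$, and \[ E\coloneqq L_{2:n,2:n}+\Gamma_{2:n,1}\,\mathbf{1}_{n-1}^\top\in\mathcal{M}_{n-1}(\mathbb{R}). \] Then every eigenvalue of $E$ is at least $\min\Gamma_{2:n,1}=\min_{2\le i\le n}\gamma_{i,1}$.
   Context: $\mathbf{1}_m$ is the all-ones vector of length $m$. $L_{2:n,2:n}$ is the submatrix of $L$ formed by rows and columns $2,\dots,n$; $\Gamma_{2:n,1}$ is the column vector $(\gamma_{2,1},\dots,\gamma_{n,1})^\top$. *)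

theory Defs
  imports "Jordan_Normal_Form.Matrix" "Jordan_Normal_Form.Determinant" "Jordan_Normal_Form.Char_Poly"
begin

(* Matrices of size n are represented as functions nat => nat => real on indices 0..n-1.
   Index 0 plays the role of the paper's index 1. *)

definition degvec :: "nat \<Rightarrow> (nat \<Rightarrow> nat \<Rightarrow> real) \<Rightarrow> nat \<Rightarrow> real" where
  "degvec n G i = (\<Sum>j<n. G i j)"

definition laplacian :: "nat \<Rightarrow> (nat \<Rightarrow> nat \<Rightarrow> real) \<Rightarrow> nat \<Rightarrow> nat \<Rightarrow> real" where
  "laplacian n G i j = (if i = j then degvec n G i else 0) - G i j"

definition Emat :: "nat \<Rightarrow> (nat \<Rightarrow> nat \<Rightarrow> real) \<Rightarrow> real mat" where
  "Emat n G = mat (n - 1) (n - 1) (\<lambda>(i, j). laplacian n G (i + 1) (j + 1) + G (i + 1) 0)"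

definition weighted_connected :: "nat \<Rightarrow> (nat \<Rightarrow> nat \<Rightarrow> real) \<Rightarrow> bool" where
  "weighted_connected n G =
     (\<forall>i<n. \<forall>j<n. (\<lambda>a b. a < n \<and> b < n \<and> 0 < G a b)\<^sup>*\<^sup>* i j)"

end

theory Submission
  imports Defs
begin

lemma lap_sym:
  assumes "\<And>i j. i < n \<Longrightarrow> j < n \<Longrightarrow> G i j = G j i" "i < n" "j < n"
  shows "laplacian n G i j = laplacian n G j i"
  using assms unfolding laplacian_def by auto

lemma quad_sym:
  assumes "\<And>i j. i < n \<Longrightarrow> j < n \<Longrightarrow> G i j = G j i"
  shows "(\<Sum>i<n. x i * (\<Sum>j<n. laplacian n G i j * y j)) = (\<Sum>i<n. y i * (\<Sum>j<n. laplacian n G i j * x j))"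
proof -
  have "(\<Sum>i<n. x i * (\<Sum>j<n. laplacian n G i j * y j)) = (\<Sum>i<n. \<Sum>j<n. x i * laplacian n G i j * y j)"
    by (simp add: sum_distrib_left mult.assoc)
  also have "\<dots> = (\<Sum>j<n. \<Sum>i<n. x i * laplacian n G i j * y j)" by (rule sum.swap)
  also have "\<dots> = (\<Sum>j<n. \<Sum>i<n. y j * laplacian n G j i * x i)"
    using lap_sym[OF assms] by (intro sum.cong refl) (auto simp: mult.commute)
  also have "\<dots> = (\<Sum>i<n. y i * (\<Sum>j<n. laplacian n G i j * x j))"
    by (simp add: sum_distrib_left mult.assoc)
  finally show ?thesis .
qed

lemma col_sum:
  assumes "\<And>i j. i < n \<Longrightarrow> j < n \<Longrightarrow> G i j = G j i" "j < n"
  shows "(\<Sum>i<n. laplacian n G i j) = 0"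
proof -
  have "(\<Sum>i<n. laplacian n G i j) = (\<Sum>i<n. (if i = j then degvec n G j else 0)) - (\<Sum>i<n. G j i)"
    unfolding laplacian_def sum_subtractf using assms by (intro arg_cong2[where f="(-)"] sum.cong) auto
  also have "\<dots> = 0" using assms(2) by (simp add: degvec_def)
  finally show ?thesis .
qed

lemma quad_expand:
  assumes "\<And>i j. i < n \<Longrightarrow> j < n \<Longrightarrow> G i j = G j i"
  shows "2 * (\<Sum>i<n. x i * (\<Sum>j<n. laplacian n G i j * x j)) = (\<Sum>i<n. \<Sum>j<n. G i j * (x i - x j)^2)"
proof -
  have A: "(\<Sum>i<n. x i * (\<Sum>j<n. laplacian n G i j * x j)) = (\<Sum>i<n. degvec n G i * x i ^2) - (\<Sum>i<n. \<Sum>j<n. G i j * x i * x j)"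
  proof -
    have "\<And>i. i < n \<Longrightarrow> (\<Sum>j<n. laplacian n G i j * x j) = degvec n G i * x i - (\<Sum>j<n. G i j * x j)"
    proof -
      fix i assume "i < n"
      have "(\<Sum>j<n. laplacian n G i j * x j) = (\<Sum>j<n. (if i = j then degvec n G i * x j else 0) - G i j * x j)"
        unfolding laplacian_def by (intro sum.cong refl) (auto simp: left_diff_distrib)
      also have "\<dots> = degvec n G i * x i - (\<Sum>j<n. G i j * x j)"
        using \<open>i < n\<close> by (simp add: sum_subtractf)
      finally show "(\<Sum>j<n. laplacian n G i j * x j) = degvec n G i * x i - (\<Sum>j<n. G i j * x j)" .
    qed
    then show ?thesis
      by (simp add: right_diff_distrib sum_subtractf sum_distrib_left power2_eq_square mult_ac)
  qed
  have B: "(\<Sum>i<n. \<Sum>j<n. G i j * (x i - x j)^2) = (\<Sum>i<n. \<Sum>j<n. G i j * x i^2) + (\<Sum>i<n. \<Sum>j<n. G i j * x j^2) - 2 * (\<Sum>i<n. \<Sum>j<n. G i j * x i * x j)"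
    by (simp add: power2_eq_square algebra_simps sum.distrib sum_subtractf sum_distrib_left)
  have C: "(\<Sum>i<n. \<Sum>j<n. G i j * x i^2) = (\<Sum>i<n. degvec n G i * x i ^2)"
    by (simp add: degvec_def sum_distrib_right)
  have D: "(\<Sum>i<n. \<Sum>j<n. G i j * x j^2) = (\<Sum>i<n. degvec n G i * x i ^2)"
  proof -
    have "(\<Sum>i<n. \<Sum>j<n. G i j * x j^2) = (\<Sum>j<n. \<Sum>i<n. G i j * x j^2)" by (rule sum.swap)
    also have "\<dots> = (\<Sum>j<n. \<Sum>i<n. G j i * x j^2)" using assms by (intro sum.cong refl) auto
    finally show ?thesis using C by simp
  qed
  show ?thesis using A B C D by simp
qed

lemma quad_bound:
  assumes sym: "\<And>i j. i < n \<Longrightarrow> j < n \<Longrightarrow> G i j = G j i"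
    and nn: "\<And>i j. i < n \<Longrightarrow> j < n \<Longrightarrow> 0 \<le> G i j"
    and m0: "0 \<le> m" and mG: "\<And>i. 1 \<le> i \<Longrightarrow> i < n \<Longrightarrow> m \<le> G i 0"
    and n0: "0 < n" and xs: "(\<Sum>i<n. x i) = 0"
  shows "m * (\<Sum>i<n. x i ^ 2) \<le> (\<Sum>i<n. x i * (\<Sum>j<n. laplacian n G i j * x j))"
proof -
  have U: "{..<n} = insert 0 {1..<n}" using n0 by auto
  let ?P = "\<Sum>i\<in>{1..<n}. G i 0 * (x i - x 0)^2"
  have S1: "(\<Sum>i\<in>{1..<n}. \<Sum>j<n. G i j * (x i - x j)^2) \<ge> ?P"
  proof (rule sum_mono)
    fix i assume i: "i \<in> {1..<n}"
    show "G i 0 * (x i - x 0)^2 \<le> (\<Sum>j<n. G i j * (x i - x j)^2)"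
      using i n0 nn by (intro member_le_sum[where f="\<lambda>j. G i j * (x i - x j)^2" and i=0]) auto
  qed
  have S2: "(\<Sum>j<n. G 0 j * (x 0 - x j)^2) = ?P"
    unfolding U using sym n0 by (simp add: power2_commute)
  have S: "(\<Sum>i<n. \<Sum>j<n. G i j * (x i - x j)^2) \<ge> 2 * ?P"
    using S1 S2 unfolding U by simp
  have P: "?P \<ge> m * (\<Sum>i\<in>{1..<n}. (x i - x 0)^2)"
    unfolding sum_distrib_left using mG m0 by (intro sum_mono mult_right_mono) auto
  have xs1: "(\<Sum>i\<in>{1..<n}. x i) = - x 0" using xs unfolding U by simp
  have R: "(\<Sum>i\<in>{1..<n}. (x i - x 0)^2) = (\<Sum>i\<in>{1..<n}. x i ^ 2) - 2 * x 0 * (\<Sum>i\<in>{1..<n}. x i) + real (n - 1) * x 0 ^ 2"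
    by (simp add: power2_diff sum.distrib sum_subtractf sum_distrib_left sum_distrib_right mult_ac)
  have R2: "(\<Sum>i\<in>{1..<n}. (x i - x 0)^2) \<ge> (\<Sum>i<n. x i ^ 2)"
  proof -
    have "0 \<le> real (n - 1) * x 0 ^ 2" by simp
    then show ?thesis unfolding R xs1 U by (simp add: power2_eq_square)
  qed
  have "m * (\<Sum>i<n. x i ^ 2) \<le> m * (\<Sum>i\<in>{1..<n}. (x i - x 0)^2)"
    using R2 m0 by (rule mult_left_mono)
  also have "\<dots> \<le> ?P" by (rule P)
  finally have "m * (\<Sum>i<n. x i ^ 2) \<le> ?P" .
  moreover have "2 * (\<Sum>i<n. x i * (\<Sum>j<n. laplacian n G i j * x j)) = (\<Sum>i<n. \<Sum>j<n. G i j * (x i - x j)^2)"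
    by (rule quad_expand) (rule sym)
  ultimately show ?thesis using S by linarith
qed

lemma sum_shift0: "0 < n \<Longrightarrow> (\<Sum>j<n. h j) = h 0 + (\<Sum>j<n-1. h (Suc j))"
  by (cases n) (simp_all only: sum.lessThan_Suc_shift diff_Suc_1)

theorem lemma4p5:
  fixes n :: nat and G :: "nat \<Rightarrow> nat \<Rightarrow> real" and k :: complex
  assumes "n \<ge> 2"
    and "\<And>i j. i < n \<Longrightarrow> j < n \<Longrightarrow> G i j = G j i"
    and "\<And>i j. i < n \<Longrightarrow> j < n \<Longrightarrow> 0 \<le> G i j \<and> G i j \<le> 1"
    and "\<And>i. i < n \<Longrightarrow> G i i = 0"
    and "\<And>i. i < n \<Longrightarrow> \<exists>j<n. j \<noteq> i \<and> 0 < G i j"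
    and "weighted_connected n G"
    and "eigenvalue (map_mat complex_of_real (Emat n G)) k"
  shows "Im k = 0 \<and> Min ((\<lambda>i. G i 0) ` {1..<n}) \<le> Re k"
proof -
  note sym = assms(2)
  have nn: "\<And>i j. i < n \<Longrightarrow> j < n \<Longrightarrow> 0 \<le> G i j" using assms(3) by blast
  have n0: "0 < n" using assms(1) by simp
  let ?L = "laplacian n G"
  let ?A = "map_mat complex_of_real (Emat n G)"
  obtain v where vc: "v \<in> carrier_vec (n-1)" and vnz: "v \<noteq> 0\<^sub>v (n-1)" and ev: "?A *\<^sub>v v = k \<cdot>\<^sub>v v"
    using assms(7) unfolding eigenvalue_def eigenvector_def by (auto simp: Emat_def)
  have dv: "dim_vec v = n - 1" using vc by auto
  have Eeq: "(\<Sum>j<n-1. complex_of_real (?L (Suc i) (Suc j) + G (Suc i) 0) * v$j) = k * v$i" if i: "i < n-1" for i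
  proof -
    have "(?A *\<^sub>v v) $ i = (k \<cdot>\<^sub>v v) $ i" using ev by simp
    then show ?thesis using i dv
      by (simp add: Emat_def scalar_prod_def lessThan_atLeast0)
  qed
  define T where "T = (\<Sum>j<n-1. v$j)"
  define f where "f = (\<lambda>i. if i = 0 then - T else v$(i-1))"
  have fS: "f (Suc j) = v$j" for j by (simp add: f_def)
  have f0: "f 0 = - T" by (simp add: f_def)
  have LfS: "(\<Sum>j<n. complex_of_real (?L (Suc i) j) * f j) = k * f (Suc i)" if i: "i < n-1" for i
  proof -
    have "(\<Sum>j<n. complex_of_real (?L (Suc i) j) * f j)
        = complex_of_real (?L (Suc i) 0) * (-T) + (\<Sum>j<n-1. complex_of_real (?L (Suc i) (Suc j)) * v$j)"
      by (subst sum_shift0[OF n0]) (simp add: fS f0)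
    also have "complex_of_real (?L (Suc i) 0) = - complex_of_real (G (Suc i) 0)"
      by (simp add: laplacian_def)
    also have "- complex_of_real (G (Suc i) 0) * (-T) + (\<Sum>j<n-1. complex_of_real (?L (Suc i) (Suc j)) * v$j)
        = (\<Sum>j<n-1. complex_of_real (?L (Suc i) (Suc j) + G (Suc i) 0) * v$j)"
      by (simp add: T_def distrib_right sum.distrib sum_distrib_left sum_negf)
    also have "\<dots> = k * f (Suc i)" using Eeq[OF i] by (simp add: fS)
    finally show ?thesis .
  qed
  have tot: "(\<Sum>i<n. \<Sum>j<n. complex_of_real (?L i j) * f j) = 0"
  proof -
    have "(\<Sum>i<n. \<Sum>j<n. complex_of_real (?L i j) * f j) = (\<Sum>j<n. (\<Sum>i<n. complex_of_real (?L i j)) * f j)"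
      by (subst sum.swap) (simp add: sum_distrib_right)
    also have "\<dots> = 0"
    proof -
      have "\<And>j. j < n \<Longrightarrow> (\<Sum>i<n. complex_of_real (?L i j)) = 0"
      proof -
        fix j assume "j < n"
        have "(\<Sum>i<n. complex_of_real (?L i j)) = complex_of_real (\<Sum>i<n. ?L i j)" by simp
        also have "\<dots> = 0" using col_sum[OF sym \<open>j < n\<close>] by simp
        finally show "(\<Sum>i<n. complex_of_real (?L i j)) = 0" .
      qed
      then show ?thesis by simp
    qed
    finally show ?thesis .
  qed
  have Lf0: "(\<Sum>j<n. complex_of_real (?L 0 j) * f j) = k * f 0"
  proof -
    have "0 = (\<Sum>j<n. complex_of_real (?L 0 j) * f j) + (\<Sum>i<n-1. k * f (Suc i))"
      using tot LfS by (subst (asm) sum_shift0[OF n0]) simp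
    moreover have "(\<Sum>i<n-1. k * f (Suc i)) = k * T" by (simp add: fS T_def sum_distrib_left)
    ultimately show ?thesis by (simp add: f0 eq_neg_iff_add_eq_0)
  qed
  have Lf: "(\<Sum>j<n. complex_of_real (?L i j) * f j) = k * f i" if i: "i < n" for i
  proof (cases i)
    case 0 then show ?thesis using Lf0 by simp
  next
    case (Suc i') then show ?thesis using LfS[of i'] i by simp
  qed
  have fsum: "(\<Sum>i<n. f i) = 0"
    by (subst sum_shift0[OF n0]) (simp add: fS f0 T_def)
  define a where "a = (\<lambda>i. Re (f i))"
  define b where "b = (\<lambda>i. Im (f i))"
  define p where "p = Re k"
  define q where "q = Im k"
  have La: "(\<Sum>j<n. ?L i j * a j) = p * a i - q * b i" if "i < n" for i
    using arg_cong[OF Lf[OF that], of Re] by (simp add: a_def b_def p_def q_def Re_sum)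
  have Lb: "(\<Sum>j<n. ?L i j * b j) = q * a i + p * b i" if "i < n" for i
    using arg_cong[OF Lf[OF that], of Im] by (simp add: a_def b_def p_def q_def Im_sum)
  have asum: "(\<Sum>i<n. a i) = 0" using arg_cong[OF fsum, of Re] by (simp add: a_def Re_sum)
  have bsum: "(\<Sum>i<n. b i) = 0" using arg_cong[OF fsum, of Im] by (simp add: b_def Im_sum)
  define N where "N = (\<Sum>i<n. a i ^ 2) + (\<Sum>i<n. b i ^ 2)"
  have Npos: "N > 0"
  proof -
    obtain i where i: "i < n - 1" "v$i \<noteq> 0" using vnz vc by (metis dv eq_vecI index_zero_vec(1,2))
    then have "f (Suc i) \<noteq> 0" by (simp add: fS)
    then have "a (Suc i) ^ 2 + b (Suc i) ^ 2 > 0"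
      by (simp add: a_def b_def complex_eq_iff sum_power2_gt_zero_iff)
    moreover have "a (Suc i) ^ 2 + b (Suc i) ^ 2 \<le> (\<Sum>j<n. a j ^ 2 + b j ^ 2)"
      using i by (intro member_le_sum) auto
    ultimately show ?thesis by (simp add: N_def sum.distrib)
  qed
  have qz: "q = 0"
  proof -
    have "(\<Sum>i<n. a i * (\<Sum>j<n. ?L i j * b j)) = (\<Sum>i<n. b i * (\<Sum>j<n. ?L i j * a j))"
      by (rule quad_sym) (rule sym)
    then have "(\<Sum>i<n. a i * (q * a i + p * b i)) = (\<Sum>i<n. b i * (p * a i - q * b i))"
      using La Lb by simp
    then have "q * N = 0"
      by (simp add: N_def algebra_simps sum.distrib sum_subtractf sum_distrib_left power2_eq_square)
    then show ?thesis using Npos by simp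
  qed
  define m where "m = Min ((\<lambda>i. G i 0) ` {1..<n})"
  have fin: "finite ((\<lambda>i. G i 0) ` {1..<n})" by simp
  have ne: "(\<lambda>i. G i 0) ` {1..<n} \<noteq> {}" using assms(1) by auto
  have mG: "\<And>i. 1 \<le> i \<Longrightarrow> i < n \<Longrightarrow> m \<le> G i 0" unfolding m_def using fin by (intro Min_le) auto
  have m0: "0 \<le> m" unfolding m_def using fin ne nn n0 by (subst Min_ge_iff) auto
  have ba: "m * (\<Sum>i<n. a i ^ 2) \<le> (\<Sum>i<n. a i * (\<Sum>j<n. ?L i j * a j))"
    by (rule quad_bound[where n=n and G=G and m=m and x=a, OF sym nn m0 mG n0 asum])
  have bb: "m * (\<Sum>i<n. b i ^ 2) \<le> (\<Sum>i<n. b i * (\<Sum>j<n. ?L i j * b j))"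
    by (rule quad_bound[where n=n and G=G and m=m and x=b, OF sym nn m0 mG n0 bsum])
  have ea: "(\<Sum>i<n. a i * (\<Sum>j<n. ?L i j * a j)) = p * (\<Sum>i<n. a i ^ 2)"
    using La qz by (simp add: sum_distrib_left power2_eq_square mult_ac)
  have eb: "(\<Sum>i<n. b i * (\<Sum>j<n. ?L i j * b j)) = p * (\<Sum>i<n. b i ^ 2)"
    using Lb qz by (simp add: sum_distrib_left power2_eq_square mult_ac)
  have "m * N \<le> p * N" using ba bb ea eb by (simp add: N_def distrib_left)
  then have "m \<le> p" using Npos by simp
  then show ?thesis using qz by (simp add: m_def p_def q_def)
qed

end
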